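(* Let $n \in \mathbb{N}$ and let $J \in \mathcal{B}(\mathbb{C}^n)$ be nilpotent. If $J = MN - NM$ for some $M, N \in \mathcal{B}(\mathbb{C}^n)$ with $M^2 = 0 = N^2$, then $J^{\lfloor (n+1)/2 \rfloor} = 0$. In particular, if $n \ge 4$ and $J_n$ denotes the $n \times n$ nilpotent Jordan cell, then $J_n$ is similar to $-J_n$ but $J_n$ is not of the form $MN - NM$ with $M^2 = 0 = N^2$. *)

theory Defs
  imports "Jordan_Normal_Form.Jordan_Normal_Form"
begin

definition nilpotent_mat :: "nat \<Rightarrow> complex mat \<Rightarrow> bool" where
  "nilpotent_mat n J \<longleftrightarrow> J \<in> carrier_mat n n \<and> (\<exists>k. J ^\<^sub>m k = 0\<^sub>m n n)"

end

theory Submission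
  imports Defs
begin

lemma dim_bound:
  fixes W V :: "'a :: field mat"
  assumes W: "W \<in> carrier_mat m n" and V: "V \<in> carrier_mat n m" and d: "det (W * V) \<noteq> 0"
  shows "m \<le> n"
proof (rule ccontr)
  assume "\<not> m \<le> n" hence nm: "n < m" by simp
  define W' where "W' = mat m m (\<lambda>(i,j). if j < n then W $$ (i,j) else 0)"
  define V' where "V' = mat m m (\<lambda>(i,j). if i < n then V $$ (i,j) else 0)"
  have W'c: "W' \<in> carrier_mat m m" and V'c: "V' \<in> carrier_mat m m" unfolding W'_def V'_def by auto
  have eq: "W' * V' = W * V"
  proof (rule eq_matI)
    fix i j assume i: "i < dim_row (W * V)" and j: "j < dim_col (W * V)"
    have "(W' * V') $$ (i,j) = (\<Sum>c\<in>{0..<m}. W' $$ (i,c) * V' $$ (c,j))"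
      using i j W V W'c V'c by (simp add: scalar_prod_def)
    also have "\<dots> = (\<Sum>c\<in>{0..<n}. W' $$ (i,c) * V' $$ (c,j))"
      by (rule sum.mono_neutral_right, insert nm i W, auto simp: W'_def V'_def)
    also have "\<dots> = (\<Sum>c\<in>{0..<n}. W $$ (i,c) * V $$ (c,j))"
      by (rule sum.cong, insert i j W V nm, auto simp: W'_def V'_def)
    also have "\<dots> = (W * V) $$ (i,j)"
      using i j W V by (simp add: scalar_prod_def)
    finally show "(W' * V') $$ (i,j) = (W * V) $$ (i,j)" .
  qed (insert W V W'c V'c, auto)
  have "det W' = 0"
  proof -
    have h: "\<And>p. p permutes {0..<m} \<Longrightarrow> (\<Prod>j<m. W' $$ (p j, j)) = 0"
    proof -
      fix p assume p: "p permutes {0..<m}"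
      have "p n < m" using p nm by (simp add: permutes_in_image)
      thus "(\<Prod>j<m. W' $$ (p j, j)) = 0"
        by (intro prod_zero[OF _ bexI[of _ n]], insert nm, auto simp: W'_def)
    qed
    show ?thesis unfolding det_col[OF W'c] by (rule sum.neutral) (simp add: h)
  qed
  hence "det (W' * V') = 0" using det_mult[OF W'c V'c] by simp
  with eq d show False by simp
qed

lemma sq_mult: "A \<in> carrier_mat n n \<Longrightarrow> B \<in> carrier_mat n n \<Longrightarrow> A * B \<in> carrier_mat n n"
  by simp
lemma sq_assoc: "A \<in> carrier_mat n n \<Longrightarrow> B \<in> carrier_mat n n \<Longrightarrow> C \<in> carrier_mat n n \<Longrightarrow>
  A * B * C = A * (B * C)"
  by simp

lemma pow_add_mat:
  fixes A :: "'a :: comm_ring_1 mat"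
  assumes A: "A \<in> carrier_mat n n"
  shows "A ^\<^sub>m (a + b) = A ^\<^sub>m a * A ^\<^sub>m b"
proof (induct b)
  case 0 thus ?case using A by simp
next
  case (Suc b)
  have "A ^\<^sub>m (a + Suc b) = A ^\<^sub>m (a + b) * A" by simp
  also have "\<dots> = A ^\<^sub>m a * A ^\<^sub>m b * A" using Suc by simp
  also have "\<dots> = A ^\<^sub>m a * A ^\<^sub>m Suc b" using A by (simp add: sq_assoc[of _ n] sq_mult[of _ n])
  finally show ?case .
qed

lemma pow_zero_ge:
  fixes A :: "'a :: comm_ring_1 mat"
  assumes A: "A \<in> carrier_mat n n" and z: "A ^\<^sub>m p = 0\<^sub>m n n" and q: "p \<le> q"
  shows "A ^\<^sub>m q = 0\<^sub>m n n"
proof -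
  have "A ^\<^sub>m q = A ^\<^sub>m p * A ^\<^sub>m (q - p)" using pow_add_mat[OF A, of p "q - p"] q by simp
  thus ?thesis using z A by simp
qed

lemma MBN:
  fixes M N :: "'a :: comm_ring_1 mat"
  assumes M: "M \<in> carrier_mat n n" and N: "N \<in> carrier_mat n n"
  shows "M * ((N * M) ^\<^sub>m j * N) = (M * N) ^\<^sub>m Suc j"
proof (induct j)
  case 0 thus ?case using M N by (simp add: sq_assoc[of _ n] sq_mult[of _ n])
next
  case (Suc j)
  have "M * ((N * M) ^\<^sub>m Suc j * N) = M * ((N * M) ^\<^sub>m j * N) * (M * N)"
    using M N by (simp add: sq_assoc[of _ n] sq_mult[of _ n])
  also have "\<dots> = (M * N) ^\<^sub>m Suc j * (M * N)" using Suc by simp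
  finally show ?case by simp
qed

lemma BN:
  fixes M N :: "'a :: comm_ring_1 mat"
  assumes M: "M \<in> carrier_mat n n" and N: "N \<in> carrier_mat n n"
  shows "(N * M) ^\<^sub>m j * N = N * (M * N) ^\<^sub>m j"
proof (induct j)
  case 0 thus ?case using M N by (simp add: sq_assoc[of _ n] sq_mult[of _ n])
next
  case (Suc j)
  have "(N * M) ^\<^sub>m Suc j * N = (N * M) ^\<^sub>m j * N * (M * N)"
    using M N by (simp add: sq_assoc[of _ n] sq_mult[of _ n])
  also have "\<dots> = N * (M * N) ^\<^sub>m j * (M * N)" using Suc by simp
  finally show ?case using M N by (simp add: sq_assoc[of _ n] sq_mult[of _ n])
qed

lemma MA0:
  fixes M N :: "'a :: comm_ring_1 mat"
  assumes M: "M \<in> carrier_mat n n" and N: "N \<in> carrier_mat n n" and MM: "M * M = 0\<^sub>m n n"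
  shows "M * (M * N) ^\<^sub>m Suc j = 0\<^sub>m n n"
proof -
  have "M * (M * N) ^\<^sub>m Suc j = M * ((M * N) ^\<^sub>m j * M) * N" using M N by (simp add: sq_assoc[of _ n] sq_mult[of _ n])
  also have "\<dots> = M * (M * (N * M) ^\<^sub>m j) * N" using BN[OF N M, of j] by simp
  also have "\<dots> = (M * M) * (N * M) ^\<^sub>m j * N" using M N by (simp add: sq_assoc[of _ n] sq_mult[of _ n])
  finally show ?thesis using MM M N by simp
qed

lemma AN0:
  fixes M N :: "'a :: comm_ring_1 mat"
  assumes M: "M \<in> carrier_mat n n" and N: "N \<in> carrier_mat n n" and NN: "N * N = 0\<^sub>m n n"
  shows "(M * N) ^\<^sub>m Suc j * N = 0\<^sub>m n n"
proof -
  have "(M * N) ^\<^sub>m Suc j * N = (M * N) ^\<^sub>m j * M * (N * N)" using M N by (simp add: sq_assoc[of _ n] sq_mult[of _ n])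
  thus ?thesis using NN M N by simp
qed

lemma key_bound:
  fixes M N :: "complex mat"
  assumes M: "M \<in> carrier_mat n n" and N: "N \<in> carrier_mat n n"
    and MM: "M * M = 0\<^sub>m n n" and NN: "N * N = 0\<^sub>m n n"
    and Ap: "(M * N) ^\<^sub>m p = 0\<^sub>m n n" and Ap1: "(M * N) ^\<^sub>m (p - 1) \<noteq> 0\<^sub>m n n" and p2: "p \<ge> 2"
  shows "2 * p - 1 \<le> n"
proof -
  define A where "A = M * N"
  define B where "B = N * M"
  have Ac: "A \<in> carrier_mat n n" and Bc: "B \<in> carrier_mat n n" unfolding A_def B_def using M N by auto
  have Az: "\<And>q. q \<ge> p \<Longrightarrow> A ^\<^sub>m q = 0\<^sub>m n n" using pow_zero_ge[OF Ac] Ap unfolding A_def by blast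
  have padd: "\<And>a b. A ^\<^sub>m a * A ^\<^sub>m b = A ^\<^sub>m (a + b)" using pow_add_mat[OF Ac] by simp
  have MBN': "\<And>j. M * (B ^\<^sub>m j * N) = A ^\<^sub>m Suc j" unfolding A_def B_def by (rule MBN[OF M N])
  have BN': "\<And>j. B ^\<^sub>m j * N = N * A ^\<^sub>m j" unfolding A_def B_def by (rule BN[OF M N])
  have MA': "\<And>j. M * A ^\<^sub>m Suc j = 0\<^sub>m n n" unfolding A_def by (rule MA0[OF M N MM])
  have AN': "\<And>j. A ^\<^sub>m Suc j * N = 0\<^sub>m n n" unfolding A_def by (rule AN0[OF M N NN])
  obtain t s where t: "t < n" and s: "s < n" and c: "(A ^\<^sub>m (p - 1)) $$ (t, s) \<noteq> 0"
  proof -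
    have "\<not> (\<forall>t<n. \<forall>s<n. (A ^\<^sub>m (p - 1)) $$ (t, s) = 0)"
    proof
      assume h: "\<forall>t<n. \<forall>s<n. (A ^\<^sub>m (p - 1)) $$ (t, s) = 0"
      have "A ^\<^sub>m (p - 1) = 0\<^sub>m n n" by (rule eq_matI, insert h Ac, auto)
      with Ap1 show False unfolding A_def by simp
    qed
    thus ?thesis using that by blast
  qed
  define m where "m = 2 * p - 1"
  define Rf where "Rf k = (if k = 0 then A ^\<^sub>m (p - 1) else if k < p then A ^\<^sub>m (p - 1 - k) * M
     else A ^\<^sub>m (2 * p - 2 - k))" for k
  define Cf where "Cf l = (if l = 0 then 1\<^sub>m n else if l < p then B ^\<^sub>m (l - 1) * N
     else A ^\<^sub>m (l - p + 1))" for l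
  have Rc: "Rf k \<in> carrier_mat n n" for k unfolding Rf_def using Ac M by auto
  have Cc: "Cf k \<in> carrier_mat n n" for k unfolding Cf_def using Ac Bc N by auto
  have diag: "Rf k * Cf k = A ^\<^sub>m (p - 1)" if k: "k < m" for k
  proof -
    consider "k = 0" | "0 < k" "k < p" | "p \<le> k" by linarith
    thus ?thesis
    proof cases
      case 1 thus ?thesis unfolding Rf_def Cf_def using Ac by simp
    next
      case 2
      have "Rf k * Cf k = A ^\<^sub>m (p - 1 - k) * M * (B ^\<^sub>m (k - 1) * N)" unfolding Rf_def Cf_def using 2 by simp
      also have "\<dots> = A ^\<^sub>m (p - 1 - k) * (M * (B ^\<^sub>m (k - 1) * N))"
        using Ac Bc M N by (simp add: sq_assoc[of _ n] sq_mult[of _ n])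
      also have "\<dots> = A ^\<^sub>m (p - 1 - k) * A ^\<^sub>m Suc (k - 1)" by (simp add: MBN')
      also have "\<dots> = A ^\<^sub>m (p - 1)" unfolding padd using 2 by (simp add: algebra_simps)
      finally show ?thesis .
    next
      case 3
      have e: "2 * p - 2 - k + (k - p + 1) = p - 1" using 3 k p2 m_def by linarith
      have "Rf k * Cf k = A ^\<^sub>m (2 * p - 2 - k) * A ^\<^sub>m (k - p + 1)" unfolding Rf_def Cf_def using 3 p2 by simp
      also have "\<dots> = A ^\<^sub>m (p - 1)" unfolding padd e ..
      finally show ?thesis .
    qed
  qed
  have upper: "Rf k * Cf l = 0\<^sub>m n n" if kl: "k < l" and l: "l < m" for k l
  proof -
    consider "k = 0" "l < p" | "k = 0" "p \<le> l" | "0 < k" "l < p" | "0 < k" "k < p" "p \<le> l" | "p \<le> k"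
      using kl by linarith
    thus ?thesis
    proof cases
      case 1
      have "Rf k * Cf l = A ^\<^sub>m Suc (p - 2) * (N * A ^\<^sub>m (l - 1))" unfolding Rf_def Cf_def BN' using 1 kl p2
        by (simp add: Suc_diff_Suc numeral_2_eq_2)
      also have "\<dots> = (A ^\<^sub>m Suc (p - 2) * N) * A ^\<^sub>m (l - 1)" using Ac N by (simp add: sq_assoc[of _ n] sq_mult[of _ n])
      finally show ?thesis unfolding AN' using Ac by simp
    next
      case 2
      have "Rf k * Cf l = A ^\<^sub>m (p - 1) * A ^\<^sub>m (l - p + 1)" unfolding Rf_def Cf_def using 2 kl p2 by simp
      also have "\<dots> = 0\<^sub>m n n" unfolding padd using 2 by (intro Az, simp)
      finally show ?thesis .
    next
      case 3
      have "Rf k * Cf l = A ^\<^sub>m (p - 1 - k) * M * (B ^\<^sub>m (l - 1) * N)" unfolding Rf_def Cf_def using 3 kl by simp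
      also have "\<dots> = A ^\<^sub>m (p - 1 - k) * (M * (B ^\<^sub>m (l - 1) * N))"
        using Ac Bc M N by (simp add: sq_assoc[of _ n] sq_mult[of _ n])
      also have "\<dots> = A ^\<^sub>m (p - 1 - k) * A ^\<^sub>m Suc (l - 1)" by (simp add: MBN')
      also have "\<dots> = 0\<^sub>m n n" unfolding padd using 3 kl by (intro Az, simp)
      finally show ?thesis .
    next
      case 4
      have "Rf k * Cf l = A ^\<^sub>m (p - 1 - k) * M * A ^\<^sub>m Suc (l - p)" unfolding Rf_def Cf_def using 4 kl
        by (simp add: Suc_diff_le)
      also have "\<dots> = A ^\<^sub>m (p - 1 - k) * (M * A ^\<^sub>m Suc (l - p))"
        using Ac M by (simp add: sq_assoc[of _ n] sq_mult[of _ n])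
      finally show ?thesis unfolding MA' using Ac by simp
    next
      case 5
      have "Rf k * Cf l = A ^\<^sub>m (2 * p - 2 - k) * A ^\<^sub>m (l - p + 1)" unfolding Rf_def Cf_def using 5 kl p2 by simp
      also have "\<dots> = 0\<^sub>m n n" unfolding padd using 5 kl l m_def by (intro Az, simp)
      finally show ?thesis .
    qed
  qed
  define W where "W = mat m n (\<lambda>(k, c). Rf k $$ (t, c))"
  define V where "V = mat n m (\<lambda>(c, l). Cf l $$ (c, s))"
  have Wc: "W \<in> carrier_mat m n" and Vc: "V \<in> carrier_mat n m" unfolding W_def V_def by auto
  have G: "(W * V) $$ (k, l) = (Rf k * Cf l) $$ (t, s)" if "k < m" "l < m" for k l
  proof -
    have "row W k = row (Rf k) t" by (rule eq_vecI, insert that t Rc[of k], auto simp: W_def)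
    moreover have "col V l = col (Cf l) s" by (rule eq_vecI, insert that s Cc[of l], auto simp: V_def)
    ultimately show ?thesis using that t s Rc[of k] Cc[of l] Wc Vc by simp
  qed
  have "det (W * V) = prod_list (diag_mat (W * V))"
  proof (rule det_lower_triangular[of m])
    fix k l assume "k < l" "l < m"
    thus "(W * V) $$ (k, l) = 0" using G upper t s by simp
  qed (insert Wc Vc, auto)
  also have "\<dots> = (\<Prod>k = 0 ..< m. (W * V) $$ (k, k))" unfolding prod_list_diag_prod using Wc by simp
  also have "\<dots> = (\<Prod>k = 0 ..< m. (A ^\<^sub>m (p - 1)) $$ (t, s))" by (rule prod.cong, auto simp: G diag)
  finally have "det (W * V) \<noteq> 0" using c by simp
  from dim_bound[OF Wc Vc this] show ?thesis unfolding m_def .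
qed

lemma index_bound:
  fixes M N :: "complex mat"
  assumes M: "M \<in> carrier_mat n n" and N: "N \<in> carrier_mat n n"
    and MM: "M * M = 0\<^sub>m n n" and NN: "N * N = 0\<^sub>m n n"
    and q: "(M * N) ^\<^sub>m q = 0\<^sub>m n n"
  shows "(M * N) ^\<^sub>m ((n + 1) div 2) = 0\<^sub>m n n"
proof (rule ccontr)
  define k where "k = (n + 1) div 2"
  define A where "A = M * N"
  have Ac: "A \<in> carrier_mat n n" unfolding A_def using M N by auto
  assume nz: "(M * N) ^\<^sub>m ((n + 1) div 2) \<noteq> 0\<^sub>m n n"
  hence nz': "A ^\<^sub>m k \<noteq> 0\<^sub>m n n" unfolding A_def k_def .
  have k1: "k \<ge> 1"
  proof (rule ccontr)
    assume "\<not> k \<ge> 1" hence "k = 0" "n = 0" unfolding k_def by auto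
    hence "A ^\<^sub>m k = 0\<^sub>m n n" using Ac by (intro eq_matI, auto)
    with nz' show False by simp
  qed
  define p where "p = (LEAST q. A ^\<^sub>m q = 0\<^sub>m n n)"
  have Ap: "A ^\<^sub>m p = 0\<^sub>m n n" unfolding p_def by (rule LeastI[of _ q], use q A_def in simp)
  have kp: "k < p"
  proof (rule ccontr)
    assume "\<not> k < p"
    hence "A ^\<^sub>m k = 0\<^sub>m n n" using pow_zero_ge[OF Ac Ap] by simp
    with nz' show False by simp
  qed
  have Ap1: "A ^\<^sub>m (p - 1) \<noteq> 0\<^sub>m n n"
  proof
    assume "A ^\<^sub>m (p - 1) = 0\<^sub>m n n"
    hence "p \<le> p - 1" unfolding p_def by (rule Least_le)
    with kp show False by simp
  qed
  have "2 * p - 1 \<le> n" by (rule key_bound[OF M N MM NN], insert Ap Ap1 kp k1, auto simp: A_def)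
  with kp show False unfolding k_def by linarith
qed

lemma uminus_zero_mat: "- 0\<^sub>m n n = (0\<^sub>m n n :: 'a :: ring mat)"
  by (rule eq_matI, auto)

lemma pow_from_J:
  fixes J X :: "complex mat"
  assumes J: "J \<in> carrier_mat n n" and X: "X \<in> carrier_mat n n" and JX: "J * X = X * X"
  shows "X ^\<^sub>m Suc q = J ^\<^sub>m q * X"
proof (induct q)
  case 0 thus ?case using X J by simp
next
  case (Suc q)
  have "X ^\<^sub>m Suc (Suc q) = J ^\<^sub>m q * X * X" using Suc by simp
  also have "\<dots> = J ^\<^sub>m q * (J * X)" using J X JX by (simp add: sq_assoc[of _ n] sq_mult[of _ n])
  also have "\<dots> = J ^\<^sub>m Suc q * X" using J X by (simp add: sq_assoc[of _ n] sq_mult[of _ n])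
  finally show ?case .
qed

lemma part1:
  fixes J M N :: "complex mat"
  assumes nil: "nilpotent_mat n J" and M: "M \<in> carrier_mat n n" and N: "N \<in> carrier_mat n n"
    and MM: "M * M = 0\<^sub>m n n" and NN: "N * N = 0\<^sub>m n n" and JMN: "J = M * N - N * M"
  shows "J ^\<^sub>m ((n + 1) div 2) = 0\<^sub>m n n"
proof -
  from nil obtain q where Jc: "J \<in> carrier_mat n n" and Jq: "J ^\<^sub>m q = 0\<^sub>m n n"
    unfolding nilpotent_mat_def by auto
  define A where "A = M * N"
  define P where "P = - N"
  define K where "K = P * M"
  have Ac: "A \<in> carrier_mat n n" unfolding A_def using M N by auto
  have Pc: "P \<in> carrier_mat n n" unfolding P_def using N by auto
  have Kc: "K \<in> carrier_mat n n" unfolding K_def using Pc M by auto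
  have PP: "P * P = 0\<^sub>m n n" unfolding P_def using N NN by simp
  have JAK: "J = A + K" unfolding JMN A_def K_def P_def by (rule eq_matI, insert M N, auto)
  have AK: "A * K = 0\<^sub>m n n"
  proof -
    have "A * K = M * (N * P) * M" unfolding A_def K_def using M N Pc by (simp add: sq_assoc[of _ n] sq_mult[of _ n])
    also have "N * P = 0\<^sub>m n n" unfolding P_def using N NN by (simp add: uminus_zero_mat)
    finally show ?thesis using M by simp
  qed
  have KA: "K * A = 0\<^sub>m n n"
  proof -
    have "K * A = P * (M * M) * N" unfolding A_def K_def using M N Pc by (simp add: sq_assoc[of _ n] sq_mult[of _ n])
    thus ?thesis using MM Pc N by simp
  qed
  have JA: "J * A = A * A" unfolding JAK using Ac Kc KA by (simp add: add_mult_distrib_mat[of _ n n])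
  have JK: "J * K = K * K" unfolding JAK using Ac Kc AK by (simp add: add_mult_distrib_mat[of _ n n])
  have "A ^\<^sub>m Suc q = 0\<^sub>m n n" unfolding pow_from_J[OF Jc Ac JA] Jq using Ac by simp
  hence Ak: "A ^\<^sub>m ((n + 1) div 2) = 0\<^sub>m n n" unfolding A_def by (rule index_bound[OF M N MM NN])
  have "K ^\<^sub>m Suc q = 0\<^sub>m n n" unfolding pow_from_J[OF Jc Kc JK] Jq using Kc by simp
  hence Kk: "K ^\<^sub>m ((n + 1) div 2) = 0\<^sub>m n n" unfolding K_def by (rule index_bound[OF Pc M PP MM])
  have AKc: "A + K \<in> carrier_mat n n" using Ac Kc by simp
  have Jpow: "J ^\<^sub>m Suc j = A ^\<^sub>m Suc j + K ^\<^sub>m Suc j" for j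
  proof (induct j)
    case 0 thus ?case using JAK Ac Kc by simp
  next
    case (Suc j)
    have "J ^\<^sub>m Suc (Suc j) = (A ^\<^sub>m Suc j + K ^\<^sub>m Suc j) * (A + K)" using Suc JAK by simp
    also have "\<dots> = A ^\<^sub>m Suc j * A + A ^\<^sub>m Suc j * K + (K ^\<^sub>m Suc j * A + K ^\<^sub>m Suc j * K)"
      unfolding add_mult_distrib_mat[OF pow_carrier_mat[OF Ac] pow_carrier_mat[OF Kc] AKc]
        mult_add_distrib_mat[OF pow_carrier_mat[OF Ac] Ac Kc] mult_add_distrib_mat[OF pow_carrier_mat[OF Kc] Ac Kc] ..
    also have "A ^\<^sub>m Suc j * K = A ^\<^sub>m j * (A * K)" using Ac Kc by (simp add: sq_assoc[of _ n] sq_mult[of _ n])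
    also have "K ^\<^sub>m Suc j * A = K ^\<^sub>m j * (K * A)" using Ac Kc by (simp add: sq_assoc[of _ n] sq_mult[of _ n])
    finally show ?case using AK KA Ac Kc by (simp add: sq_mult[of _ n])
  qed
  show ?thesis
  proof (cases "(n + 1) div 2")
    case 0
    hence "n = 0" by auto
    thus ?thesis using Jc by (intro eq_matI, auto)
  next
    case (Suc j)
    thus ?thesis using Jpow[of j] Ak Kk by simp
  qed
qed

lemma jordan_sim_neg:
  "similar_mat (jordan_block n (0::complex)) (- jordan_block n 0)"
proof -
  define D :: "complex mat" where "D = mat n n (\<lambda>(i, j). if i = j then (-1) ^ i else 0)"
  have Dc: "D \<in> carrier_mat n n" unfolding D_def by auto
  have DL: "(D * X) $$ (i, j) = (-1) ^ i * X $$ (i, j)" if X: "X \<in> carrier_mat n n" and i: "i < n" and j: "j < n" for X i j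
  proof -
    have "(D * X) $$ (i, j) = (\<Sum>c\<in>{0..<n}. (if i = c then (-1) ^ i else 0) * X $$ (c, j))"
      using X i j Dc by (simp add: scalar_prod_def D_def)
    also have "\<dots> = (\<Sum>c\<in>{0..<n}. if c = i then (-1) ^ i * X $$ (i, j) else 0)" by (rule sum.cong, auto)
    also have "\<dots> = (-1) ^ i * X $$ (i, j)" using i by simp
    finally show ?thesis .
  qed
  have DR: "(X * D) $$ (i, j) = X $$ (i, j) * (-1) ^ j" if X: "X \<in> carrier_mat n n" and i: "i < n" and j: "j < n" for X i j
  proof -
    have "(X * D) $$ (i, j) = (\<Sum>c\<in>{0..<n}. X $$ (i, c) * (if c = j then (-1) ^ c else 0))"
      using X i j Dc by (simp add: scalar_prod_def D_def)
    also have "\<dots> = (\<Sum>c\<in>{0..<n}. if c = j then X $$ (i, j) * (-1) ^ j else 0)" by (rule sum.cong, auto)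
    also have "\<dots> = X $$ (i, j) * (-1) ^ j" using j by simp
    finally show ?thesis .
  qed
  have DD: "D * D = 1\<^sub>m n"
  proof (rule eq_matI)
    fix i j assume "i < dim_row (1\<^sub>m n :: complex mat)" "j < dim_col (1\<^sub>m n :: complex mat)"
    hence i: "i < n" and j: "j < n" by auto
    show "(D * D) $$ (i, j) = 1\<^sub>m n $$ (i, j)"
      by (subst DL[OF Dc i j], insert i j, auto simp: D_def minus_one_mult_self)
  qed (insert Dc, auto)
  have eq: "jordan_block n 0 = D * (- jordan_block n 0) * D"
  proof (rule eq_matI)
    fix i j assume i: "i < dim_row (D * (- jordan_block n (0::complex)) * D)" and j: "j < dim_col (D * (- jordan_block n (0::complex)) * D)"
    hence i: "i < n" and j: "j < n" using Dc by auto
    have "(D * (- jordan_block n 0) * D) $$ (i, j) = (-1) ^ i * (- jordan_block n (0::complex) $$ (i, j)) * (-1) ^ j"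
      using i j Dc by (subst DR, simp, simp, simp, subst DL, auto)
    also have "\<dots> = jordan_block n 0 $$ (i, j)"
      using i j by (auto simp: jordan_block_def power_add)
    finally show "jordan_block n 0 $$ (i, j) = (D * (- jordan_block n 0) * D) $$ (i, j)" ..
  qed (insert Dc, auto)
  show ?thesis by (rule similar_matI[of _ _ D D n], insert Dc DD eq, auto)
qed

lemma jordan_nil: "nilpotent_mat n (jordan_block n (0::complex))"
proof -
  have "jordan_block n (0::complex) ^\<^sub>m n = 0\<^sub>m n n"
    unfolding jordan_block_pow by (rule eq_matI, auto)
  thus ?thesis unfolding nilpotent_mat_def by auto
qed

lemma jordan_pow_nz: assumes "k < n" shows "jordan_block n (0::complex) ^\<^sub>m k \<noteq> 0\<^sub>m n n"
proof
  assume "jordan_block n (0::complex) ^\<^sub>m k = 0\<^sub>m n n"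
  hence "(jordan_block n (0::complex) ^\<^sub>m k) $$ (0, k) = 0\<^sub>m n n $$ (0, k)" by simp
  thus False using assms unfolding jordan_block_pow by simp
qed

theorem corollary3p04:
  fixes n :: nat
  shows "(\<forall>J M N :: complex mat.
            nilpotent_mat n J \<and> M \<in> carrier_mat n n \<and> N \<in> carrier_mat n n \<and>
            M * M = 0\<^sub>m n n \<and> N * N = 0\<^sub>m n n \<and> J = M * N - N * M
            \<longrightarrow> J ^\<^sub>m ((n + 1) div 2) = 0\<^sub>m n n)
       \<and> (n \<ge> 4 \<longrightarrow>
            similar_mat (jordan_block n (0::complex)) (- jordan_block n 0) \<and>
            \<not> (\<exists>M N :: complex mat. M \<in> carrier_mat n n \<and> N \<in> carrier_mat n n \<and>
                 M * M = 0\<^sub>m n n \<and> N * N = 0\<^sub>m n n \<and>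
                 jordan_block n 0 = M * N - N * M))"
proof (intro conjI allI impI)
  fix J M N :: "complex mat"
  assume "nilpotent_mat n J \<and> M \<in> carrier_mat n n \<and> N \<in> carrier_mat n n \<and>
            M * M = 0\<^sub>m n n \<and> N * N = 0\<^sub>m n n \<and> J = M * N - N * M"
  thus "J ^\<^sub>m ((n + 1) div 2) = 0\<^sub>m n n" using part1 by blast
next
  show "similar_mat (jordan_block n (0::complex)) (- jordan_block n 0)" by (rule jordan_sim_neg)
next
  assume n4: "n \<ge> 4"
  show "\<not> (\<exists>M N :: complex mat. M \<in> carrier_mat n n \<and> N \<in> carrier_mat n n \<and>
                 M * M = 0\<^sub>m n n \<and> N * N = 0\<^sub>m n n \<and>
                 jordan_block n 0 = M * N - N * M)"
  proof
    assume "\<exists>M N :: complex mat. M \<in> carrier_mat n n \<and> N \<in> carrier_mat n n \<and>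
                 M * M = 0\<^sub>m n n \<and> N * N = 0\<^sub>m n n \<and>
                 jordan_block n 0 = M * N - N * M"
    then obtain M N :: "complex mat" where h: "M \<in> carrier_mat n n" "N \<in> carrier_mat n n"
      "M * M = 0\<^sub>m n n" "N * N = 0\<^sub>m n n" "jordan_block n 0 = M * N - N * M" by blast
    have "jordan_block n (0::complex) ^\<^sub>m ((n + 1) div 2) = 0\<^sub>m n n"
      by (rule part1[OF jordan_nil h])
    moreover have "(n + 1) div 2 < n" using n4 by linarith
    ultimately show False using jordan_pow_nz by blast
  qed
qed

end
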